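(* Let $G=(V,E)$ be a strongly connected digraph with $V=\{v_1,\dots,v_n\}$. Then every evolution $(A_k)_{k\geq 0}$ of the set-valued map $f_{\mathrm{imcor}}$ on $\operatorname{Adj}(G)$ (i.e., any $A_0\in\operatorname{Adj}(G)$ and $A_{k+1}\in f_{\mathrm{imcor}}(A_k)$ for all $k$) converges in finite time to a weight-balanced adjacency matrix: there exists $K$ such that $A_K$ is weight-balanced and $A_k=A_K$ for all $k\geq K$.
   Context: A digraph $G=(V,E)$ has finite vertex set $V$ and edge set $E\subseteq V\times V$; it is strongly connected if there is a directed path between every ordered pair of distinct vertices. $\operatorname{Adj}(G)$ is the set of matrices $A=(a_{ij})\in\mathbb{R}^{n\times n}_{\geq0}$ with $a_{ij}>0$ if $(v_i,v_j)\in E$ and $a_{ij}=0$ otherwise. For $A\in\operatorname{Adj}(G)$, the imbalance of $v_i$ is $\omega(v_i)=\sum_{j}a_{ji}-\sum_j a_{ij}$, and $A$ is weight-balanced if $\omega(v_i)=0$ for all $i$. For $A\in\operatorname{Adj}(G)$ and each $i$, let $a_i^*=\min\{a_{ik}: k\in\{1,\dots,n\}\setminus\{i\},\ a_{ik}\neq0\}$ and $J_i^*=\{j\in\{1,\dots,n\}\setminus\{i\}: a_{ij}=a_i^*\}$. The map $f_{\mathrm{imcor}}:\operatorname{Adj}(G)\rightrightarrows\operatorname{Adj}(G)$ assigns to $A$ the set of all $B\in\operatorname{Adj}(G)$ such that for each $i$ there exists $j_i^*\in J_i^*$ with $b_{ij}=a_{ij}+\omega(v_i)$ if $\omega(v_i)>0$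 and $j=j_i^*$, and $b_{ij}=a_{ij}$ otherwise (imbalances computed with respect to $A$). This models a synchronous algorithm in which each agent with positive imbalance adds its imbalance to one of its out-edges (to a vertex other than itself) of minimum weight. *)

theory Defs
  imports Complex_Main
begin

text \<open>Vertices v_1..v_n are represented by the indices 0..n-1; a digraph is an edge
relation E on these indices; matrices are functions nat => nat => real that vanish
outside the index range.\<close>

definition strongly_connected :: "nat \<Rightarrow> (nat \<times> nat) set \<Rightarrow> bool" where
  "strongly_connected n E \<longleftrightarrow> (\<forall>i<n. \<forall>j<n. i \<noteq> j \<longrightarrow> (i, j) \<in> E\<^sup>+)"

definition Adj :: "nat \<Rightarrow> (nat \<times> nat) set \<Rightarrow> (nat \<Rightarrow> nat \<Rightarrow> real) set" where
  "Adj n E = {A. (\<forall>i j. ((i, j) \<in> E \<longrightarrow> A i j > 0) \<and> ((i, j) \<notin> E \<longrightarrow> A i j = 0))}"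

definition imbalance :: "nat \<Rightarrow> (nat \<Rightarrow> nat \<Rightarrow> real) \<Rightarrow> nat \<Rightarrow> real" where
  "imbalance n A i = (\<Sum>j<n. A j i) - (\<Sum>j<n. A i j)"

definition weight_balanced :: "nat \<Rightarrow> (nat \<Rightarrow> nat \<Rightarrow> real) \<Rightarrow> bool" where
  "weight_balanced n A \<longleftrightarrow> (\<forall>i<n. imbalance n A i = 0)"

definition astar :: "nat \<Rightarrow> (nat \<Rightarrow> nat \<Rightarrow> real) \<Rightarrow> nat \<Rightarrow> real" where
  "astar n A i = Min {A i k | k. k < n \<and> k \<noteq> i \<and> A i k \<noteq> 0}"

definition Jstar :: "nat \<Rightarrow> (nat \<Rightarrow> nat \<Rightarrow> real) \<Rightarrow> nat \<Rightarrow> nat set" where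
  "Jstar n A i = {j. j < n \<and> j \<noteq> i \<and> A i j \<noteq> 0 \<and> A i j = astar n A i}"

definition f_imcor :: "nat \<Rightarrow> (nat \<times> nat) set \<Rightarrow> (nat \<Rightarrow> nat \<Rightarrow> real)
    \<Rightarrow> (nat \<Rightarrow> nat \<Rightarrow> real) set" where
  "f_imcor n E A = {B \<in> Adj n E. \<forall>i<n. \<exists>j\<in>Jstar n A i. \<forall>l<n.
      B i l = (if imbalance n A i > 0 \<and> l = j then A i l + imbalance n A i else A i l)}"

end

theory Submission
  imports Defs
begin

locale imcor =
  fixes n :: nat and E :: "(nat \<times> nat) set" and A :: "nat \<Rightarrow> nat \<Rightarrow> nat \<Rightarrow> real"
  assumes Erange: "E \<subseteq> {..<n} \<times> {..<n}"
    and sc: "strongly_connected n E"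
    and A0: "A 0 \<in> Adj n E"
    and stp: "\<forall>k. A (Suc k) \<in> f_imcor n E (A k)"
begin

definition om :: "nat \<Rightarrow> nat \<Rightarrow> real" where "om k i = imbalance n (A k) i"

definition c :: "nat \<Rightarrow> nat \<Rightarrow> nat" where
  "c k i = (SOME j. j \<in> Jstar n (A k) i \<and> (\<forall>l<n. A (Suc k) i l =
      (if om k i > 0 \<and> l = j then A k i l + om k i else A k i l)))"

definition Pos where "Pos k = {i. i < n \<and> om k i > 0}"
definition Neg where "Neg k = {i. i < n \<and> om k i < 0}"
definition mu where "mu k = card (Pos k) + card (Neg k)"
definition inflow where "inflow k i = (\<Sum>j<n. if om k j > 0 \<and> i = c k j then om k j else 0)"

lemma adj: "A k \<in> Adj n E"
  using A0 stp by (cases k) (auto simp: f_imcor_def)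

lemma nonneg: "A k i j \<ge> 0"
  using adj[of k] unfolding Adj_def by (cases "(i,j) \<in> E") (auto simp: less_imp_le)

lemma c_prop: assumes "i < n"
  shows "c k i \<in> Jstar n (A k) i \<and> (\<forall>l<n. A (Suc k) i l =
      (if om k i > 0 \<and> l = c k i then A k i l + om k i else A k i l))"
proof -
  have "\<exists>j. j \<in> Jstar n (A k) i \<and> (\<forall>l<n. A (Suc k) i l =
      (if om k i > 0 \<and> l = j then A k i l + om k i else A k i l))"
    using stp assms unfolding f_imcor_def om_def by blast
  then show ?thesis unfolding c_def by (rule someI_ex)
qed

lemma c_lt: "i < n \<Longrightarrow> c k i < n" and c_ne: "i < n \<Longrightarrow> c k i \<noteq> i"
  using c_prop[of i k] by (auto simp: Jstar_def)

lemma upd: "i < n \<Longrightarrow> l < n \<Longrightarrow>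
  A (Suc k) i l = A k i l + (if om k i > 0 \<and> l = c k i then om k i else 0)"
  using c_prop[of i k] by auto

lemma recur: assumes "i < n"
  shows "om (Suc k) i = om k i - max (om k i) 0 + inflow k i"
proof -
  have col: "(\<Sum>j<n. A (Suc k) j i) = (\<Sum>j<n. A k j i) + inflow k i"
  proof -
    have "(\<Sum>j<n. A (Suc k) j i) = (\<Sum>j<n. A k j i + (if om k j > 0 \<and> i = c k j then om k j else 0))"
      by (rule sum.cong) (use assms upd in auto)
    then show ?thesis unfolding inflow_def by (simp add: sum.distrib)
  qed
  have row: "(\<Sum>l<n. A (Suc k) i l) = (\<Sum>l<n. A k i l) + max (om k i) 0"
  proof -
    have "(\<Sum>l<n. A (Suc k) i l) = (\<Sum>l<n. A k i l + (if l = c k i then (if om k i > 0 then om k i else 0) else 0))"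
      by (rule sum.cong) (use assms upd in auto)
    also have "\<dots> = (\<Sum>l<n. A k i l) + (if om k i > 0 then om k i else 0)"
      using c_lt[OF assms, of k] by (simp add: sum.distrib)
    finally show ?thesis by auto
  qed
  show ?thesis using col row unfolding om_def imbalance_def by simp
qed

lemma inflow_nonneg: "inflow k i \<ge> 0"
  unfolding inflow_def by (rule sum_nonneg) auto

lemma sum_zero: "(\<Sum>i<n. om k i) = 0"
  unfolding om_def imbalance_def by (simp add: sum_subtractf sum.swap[of "\<lambda>i j. A k j i"])

lemma finP: "finite (Pos k)" and finN: "finite (Neg k)"
  unfolding Pos_def Neg_def by auto

lemma neg_mono: "Neg (Suc k) \<subseteq> Neg k"
proof
  fix i assume i: "i \<in> Neg (Suc k)"
  then have "i < n" by (simp add: Neg_def)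
  show "i \<in> Neg k"
  proof (rule ccontr)
    assume "i \<notin> Neg k"
    then have "om k i \<ge> 0" using \<open>i<n\<close> by (auto simp: Neg_def)
    then have "om (Suc k) i \<ge> 0" using recur[OF \<open>i<n\<close>, of k] inflow_nonneg[of k i] by simp
    then show False using i by (simp add: Neg_def)
  qed
qed

lemma pos_sub: "Pos (Suc k) \<subseteq> c k ` Pos k"
proof
  fix i assume i: "i \<in> Pos (Suc k)"
  then have "i < n" by (simp add: Pos_def)
  show "i \<in> c k ` Pos k"
  proof (rule ccontr)
    assume ni: "i \<notin> c k ` Pos k"
    have "inflow k i = 0" unfolding inflow_def
      by (rule sum.neutral) (use ni in \<open>auto simp: Pos_def\<close>)
    then have "om (Suc k) i \<le> 0" using recur[OF \<open>i<n\<close>, of k] by simp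
    then show False using i by (simp add: Pos_def)
  qed
qed

lemma card_pos: "card (Pos (Suc k)) \<le> card (Pos k)"
  by (meson card_image_le card_mono finP finite_imageI order_trans pos_sub)

lemma mu_step: "mu (Suc k) \<le> mu k"
  unfolding mu_def using card_pos[of k] card_mono[OF finN neg_mono[of k]] by simp

lemma mu_mono: "k \<le> k' \<Longrightarrow> mu k' \<le> mu k"
  by (rule lift_Suc_antimono_le[of mu]) (rule mu_step)

lemma balanced_step: assumes "weight_balanced n (A k)" shows "A (Suc k) = A k"
proof (rule ext, rule ext)
  fix i l
  show "A (Suc k) i l = A k i l"
  proof (cases "i < n \<and> l < n")
    case True
    then show ?thesis using upd[of i l k] assms by (auto simp: weight_balanced_def om_def)
  next
    case False
    then have "(i,l) \<notin> E" using Erange by auto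
    then show ?thesis using adj[of k] adj[of "Suc k"] by (simp add: Adj_def)
  qed
qed

end

locale stab = imcor +
  fixes k0 :: nat
  assumes stable: "\<forall>k\<ge>k0. mu k = mu k0"
begin

lemma card_eq: assumes "k \<ge> k0"
  shows "card (Pos (Suc k)) = card (Pos k) \<and> Neg (Suc k) = Neg k"
proof -
  have e1: "mu (Suc k) = mu k0" using assms by (intro stable[rule_format]) simp
  have e2: "mu k = mu k0" using assms by (intro stable[rule_format]) simp
  have "mu (Suc k) = mu k" using e1 e2 by (rule trans[OF _ sym])
  moreover have "card (Pos (Suc k)) \<le> card (Pos k)" by (rule card_pos)
  moreover have "card (Neg (Suc k)) \<le> card (Neg k)" by (rule card_mono[OF finN neg_mono])
  ultimately have "card (Pos (Suc k)) = card (Pos k)" "card (Neg (Suc k)) = card (Neg k)"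
    unfolding mu_def by linarith+
  then show ?thesis using card_subset_eq[OF finN neg_mono] by simp
qed

lemma neg_const: "k \<ge> k0 \<Longrightarrow> Neg k = Neg k0"
proof (induction k rule: dec_induct)
  case (step k) then show ?case using card_eq[of k] by simp
qed simp

lemma no_hit: assumes "k \<ge> k0" "j \<in> Pos k" shows "c k j \<notin> Neg k"
proof
  assume i: "c k j \<in> Neg k"
  have "c k j \<in> Neg (Suc k)" using i card_eq[OF assms(1)] by simp
  then have "c k j \<notin> Pos (Suc k)" by (simp add: Pos_def Neg_def)
  then have "Pos (Suc k) \<subseteq> c k ` Pos k - {c k j}" using pos_sub by blast
  then have "card (Pos (Suc k)) \<le> card (c k ` Pos k - {c k j})"
    by (simp add: card_mono finP)
  also have "\<dots> = card (c k ` Pos k) - 1" using assms(2) by (simp add: finP)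
  also have "\<dots> \<le> card (Pos k) - 1" using card_image_le[OF finP, of "c k" k] by simp
  also have "\<dots> < card (Pos k)"
  proof -
    have "card (Pos k) > 0" using assms(2) finP[of k] card_gt_0_iff by blast
    then show ?thesis by simp
  qed
  finally show False using card_eq[OF assms(1)] by simp
qed

lemma inj: assumes "k \<ge> k0" shows "inj_on (c k) (Pos k)"
proof -
  have "card (Pos (Suc k)) \<le> card (c k ` Pos k)" by (simp add: card_mono finP pos_sub)
  then have "card (c k ` Pos k) = card (Pos k)"
    using card_eq[OF assms] card_image_le[OF finP, of "c k" k] by simp
  then show ?thesis using eq_card_imp_inj_on[OF finP] by blast
qed

lemma mass: assumes "k \<ge> k0" "j \<in> Pos k" shows "om (Suc k) (c k j) = om k j"
proof -
  have jn: "j < n" "om k j > 0" using assms(2) by (auto simp: Pos_def)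
  have "inflow k (c k j) = (\<Sum>j'<n. if j' = j then om k j else 0)"
    unfolding inflow_def
  proof (rule sum.cong)
    fix j' assume "j' \<in> {..<n}"
    then show "(if om k j' > 0 \<and> c k j = c k j' then om k j' else 0) = (if j' = j then om k j else 0)"
      using inj[OF assms(1)] assms(2) jn by (auto simp: Pos_def inj_on_def)
  qed simp
  also have "\<dots> = om k j" using jn by simp
  finally have inf: "inflow k (c k j) = om k j" .
  have "om k (c k j) \<ge> 0" using no_hit[OF assms] c_lt[OF jn(1), of k] by (auto simp: Neg_def)
  then show ?thesis using recur[OF c_lt[OF jn(1)], of k] inf by simp
qed

lemma card_const: "k \<ge> k0 \<Longrightarrow> card (Pos k) = card (Pos k0)"
proof (induction k rule: dec_induct)
  case (step k) then show ?case using card_eq[of k] by simp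
qed simp

lemma pos_ne: assumes "k \<ge> k0" "Pos k0 \<noteq> {}" shows "Pos k \<noteq> {}"
proof
  assume "Pos k = {}"
  then have "card (Pos k0) = 0" using card_const[OF assms(1)] by simp
  then show False using assms(2) finP[of k0] by simp
qed

definition mm where "mm = Min (om k0 ` Pos k0)"

lemma mm_pos: "Pos k0 \<noteq> {} \<Longrightarrow> mm > 0"
proof -
  assume ne: "Pos k0 \<noteq> {}"
  have "\<forall>a\<in>om k0 ` Pos k0. 0 < a" by (auto simp: Pos_def)
  then show "mm > 0" unfolding mm_def using Min_gr_iff[of "om k0 ` Pos k0" 0] finP[of k0] ne by blast
qed

lemma mass_lb: "k \<ge> k0 \<Longrightarrow> i \<in> Pos k \<Longrightarrow> om k i \<ge> mm"
proof (induction k arbitrary: i rule: dec_induct)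
  case base then show ?case unfolding mm_def by (intro Min_le) (auto simp: finP)
next
  case (step k)
  then obtain j where "j \<in> Pos k" "i = c k j" using pos_sub by blast
  then show ?case using step mass[of k j] by simp
qed

definition freq where "freq u \<longleftrightarrow> (\<forall>K. \<exists>k\<ge>K. om k u > 0)"

lemma freq_edge:
  assumes ne: "Pos k0 \<noteq> {}" and un: "u < n" and vn: "v < n" and e: "(u,v) \<in> E" and uv: "v \<noteq> u"
    and fu: "freq u"
  shows "freq v"
proof (rule ccontr)
  assume "\<not> freq v"
  then obtain K where K: "\<forall>k\<ge>K. \<not> om k v > 0" unfolding freq_def by blast
  define K1 where "K1 = max K k0"
  define w where "w = A K1 u v"
  have cne: "c k u \<noteq> v" if "k \<ge> K1" "om k u > 0" for k
  proof -
    have e1: "om (Suc k) (c k u) = om k u" using mass[of k u] that un by (simp add: K1_def Pos_def)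
    have "Suc k \<ge> K" using that by (simp add: K1_def)
    then have "\<not> om (Suc k) v > 0" using K by blast
    then show ?thesis using e1 that(2) by auto
  qed
  have wconst: "A k u v = w" if "k \<ge> K1" for k
    using that
  proof (induction k rule: dec_induct)
    case base then show ?case by (simp add: w_def)
  next
    case (step k)
    have "A (Suc k) u v = A k u v"
    proof (cases "om k u > 0")
      case True
      then have "c k u \<noteq> v" using cne step(1) by blast
      then show ?thesis using upd[OF un vn, of k] by simp
    next
      case False
      then show ?thesis using upd[OF un vn, of k] by simp
    qed
    then show ?case using step by simp
  qed
  have wpos: "w > 0" using adj[of K1] e unfolding Adj_def w_def by blast
  have cle: "A k u (c k u) \<le> w" if "k \<ge> K1" for k
  proof -
    have "c k u \<in> Jstar n (A k) u" using c_prop[OF un] by blast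
    then have eq: "A k u (c k u) = astar n (A k) u" by (simp add: Jstar_def)
    let ?S = "{A k u k' | k'. k' < n \<and> k' \<noteq> u \<and> A k u k' \<noteq> 0}"
    have fin: "finite ?S" by (rule finite_subset[of _ "A k u ` {..<n}"]) auto
    have "A k u v > 0" using adj[of k] e unfolding Adj_def by blast
    then have "A k u v \<noteq> 0" by simp
    then have "A k u v \<in> ?S" using vn uv by blast
    then have "astar n (A k) u \<le> A k u v" unfolding astar_def using fin by (rule Min_le[rotated])
    then show ?thesis using eq wconst[OF that] by simp
  qed
  have mmp: "mm > 0" using mm_pos[OF ne] .
  define Phi where "Phi k = (\<Sum>l<n. min (A k u l) (w + mm))" for k
  have Phi_step: "Phi k \<le> Phi (Suc k)" for k
    unfolding Phi_def
  proof (rule sum_mono)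
    fix l assume "l \<in> {..<n}"
    then show "min (A k u l) (w + mm) \<le> min (A (Suc k) u l) (w + mm)"
      using upd[OF un, of l k] by auto
  qed
  have Phi_mono: "k \<le> k' \<Longrightarrow> Phi k \<le> Phi k'" for k k'
    by (rule lift_Suc_mono_le[of Phi]) (rule Phi_step)
  have Phi_jump: "Phi (Suc k) \<ge> Phi k + mm" if "k \<ge> K1" "om k u > 0" for k
  proof -
    let ?c = "c k u"
    have cn: "?c < n" using c_lt[OF un] .
    have ml: "om k u \<ge> mm" using mass_lb[of k u] that un by (simp add: K1_def Pos_def)
    have other: "(\<Sum>l\<in>{..<n} - {?c}. min (A (Suc k) u l) (w + mm)) = (\<Sum>l\<in>{..<n} - {?c}. min (A k u l) (w + mm))"
      by (rule sum.cong) (use upd[OF un] in auto)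
    have cv: "A (Suc k) u ?c = A k u ?c + om k u" using upd[OF un cn, of k] that by simp
    have "min (A (Suc k) u ?c) (w + mm) \<ge> min (A k u ?c) (w + mm) + mm"
      using cv ml cle[OF that(1)] nonneg[of k u ?c] mmp by auto
    then show ?thesis unfolding Phi_def
      using sum.remove[of "{..<n}" ?c "\<lambda>l. min (A (Suc k) u l) (w + mm)"]
        sum.remove[of "{..<n}" ?c "\<lambda>l. min (A k u l) (w + mm)"] cn other by simp
  qed
  have Phi_bound: "Phi k \<le> real n * (w + mm)" for k
    unfolding Phi_def using sum_bounded_above[of "{..<n}" "\<lambda>l. min (A k u l) (w + mm)" "w + mm"] by simp
  have Phi_nn: "Phi k \<ge> 0" for k
    unfolding Phi_def using nonneg wpos mmp by (intro sum_nonneg) auto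
  have grow: "\<exists>k\<ge>K1. Phi k \<ge> real N * mm" for N
  proof (induction N)
    case 0 then show ?case using Phi_nn by auto
  next
    case (Suc N)
    then obtain k where k: "k \<ge> K1" "Phi k \<ge> real N * mm" by blast
    obtain t where t: "t \<ge> k" "om t u > 0" using fu unfolding freq_def by blast
    have "Phi (Suc t) \<ge> Phi t + mm" using Phi_jump[of t] t k by simp
    moreover have "Phi t \<ge> Phi k" using Phi_mono t by simp
    ultimately have "Phi (Suc t) \<ge> real (Suc N) * mm" using k by (simp add: algebra_simps)
    then show ?case using t k by (intro exI[of _ "Suc t"]) auto
  qed
  obtain N where N: "real n * (w + mm) < real N * mm" using reals_Archimedean3[OF mmp] by blast
  obtain k where "Phi k \<ge> real N * mm" using grow by blast
  then show False using N Phi_bound[of k] by simp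
qed

lemma freq_trancl: assumes "(x,y) \<in> E\<^sup>+" "freq x" "Pos k0 \<noteq> {}" shows "freq y"
  using assms(1,2)
proof (induction rule: trancl_induct)
  case (base y)
  then show ?case using freq_edge[OF assms(3), of x y] Erange by (cases "y = x") auto
next
  case (step y z)
  then show ?case using freq_edge[OF assms(3), of y z] Erange by (cases "z = y") auto
qed

lemma exists_freq: assumes "Pos k0 \<noteq> {}" shows "\<exists>u<n. freq u"
proof (rule ccontr)
  assume "\<not> (\<exists>u<n. freq u)"
  then have "\<forall>u. \<exists>K. u < n \<longrightarrow> (\<forall>k\<ge>K. \<not> om k u > 0)" unfolding freq_def by blast
  then obtain f where f: "\<And>u k. u < n \<Longrightarrow> k \<ge> f u \<Longrightarrow> \<not> om k u > 0" by metis
  define M where "M = k0 + (\<Sum>u<n. f u)"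
  have "Pos M \<noteq> {}" using pos_ne[OF _ assms, of M] by (simp add: M_def)
  then obtain u where u: "u < n" "om M u > 0" by (auto simp: Pos_def)
  have "f u \<le> (\<Sum>u<n. f u)" using u(1) by (intro member_le_sum) auto
  then have "M \<ge> f u" by (simp add: M_def)
  then show False using f u by blast
qed

lemma not_pos: "Pos k0 = {}"
proof (rule ccontr)
  assume ne: "Pos k0 \<noteq> {}"
  then obtain j where j: "j < n" "om k0 j > 0" by (auto simp: Pos_def)
  have "Neg k0 \<noteq> {}"
  proof
    assume "Neg k0 = {}"
    have nn: "\<forall>i\<in>{..<n}. om k0 i \<ge> 0"
    proof
      fix i assume i: "i \<in> {..<n}"
      then have "i \<notin> Neg k0" using \<open>Neg k0 = {}\<close> by simp
      then show "om k0 i \<ge> 0" using i by (simp add: Neg_def)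
    qed
    then have "\<forall>i\<in>{..<n}. om k0 i = 0" using sum_nonneg_eq_0_iff[of "{..<n}" "om k0"] sum_zero by simp
    then show False using j by auto
  qed
  then obtain i where i: "i \<in> Neg k0" by blast
  then have "i < n" by (simp add: Neg_def)
  obtain u where u: "u < n" "freq u" using exists_freq[OF ne] by blast
  have "freq i"
  proof (cases "i = u")
    case True then show ?thesis using u by simp
  next
    case False
    then have "(u,i) \<in> E\<^sup>+" using sc u \<open>i<n\<close> by (auto simp: strongly_connected_def)
    then show ?thesis using freq_trancl u ne by blast
  qed
  then obtain k where k: "k \<ge> k0" "om k i > 0" unfolding freq_def by blast
  have "i \<in> Neg k" using neg_const[OF k(1)] i by simp
  then show False using k(2) by (simp add: Neg_def)
qed

lemma balanced: "weight_balanced n (A k0)"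
proof -
  have np: "\<forall>i\<in>{..<n}. - om k0 i \<ge> 0"
  proof
    fix i assume i: "i \<in> {..<n}"
    then have "i \<notin> Pos k0" using not_pos by simp
    then show "- om k0 i \<ge> 0" using i by (simp add: Pos_def)
  qed
  have "(\<Sum>i<n. - om k0 i) = 0" using sum_zero by (simp add: sum_negf)
  then have "\<forall>i\<in>{..<n}. om k0 i = 0" using sum_nonneg_eq_0_iff[of "{..<n}" "\<lambda>i. - om k0 i"] np by simp
  then show ?thesis by (auto simp: weight_balanced_def om_def)
qed

end

context imcor begin

lemma main: "\<exists>K. weight_balanced n (A K) \<and> (\<forall>k\<ge>K. A k = A K)"
proof -
  obtain k0 where k0: "\<forall>k. mu k0 \<le> mu k"
  proof -
    have ex: "\<exists>k. mu k = mu 0" by blast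
    define m0 where "m0 = (LEAST x. \<exists>k. mu k = x)"
    have "\<exists>k. mu k = m0" unfolding m0_def using ex by (rule LeastI)
    then obtain k0 where "mu k0 = m0" by blast
    moreover have "m0 \<le> mu k" for k unfolding m0_def by (rule Least_le) blast
    ultimately have "\<forall>k. mu k0 \<le> mu k" by simp
    then show ?thesis by (rule that)
  qed
  have st: "\<forall>k\<ge>k0. mu k = mu k0"
  proof (intro allI impI)
    fix k assume "k0 \<le> k"
    then have "mu k \<le> mu k0" by (rule mu_mono)
    then show "mu k = mu k0" using k0 by (intro antisym) auto
  qed
  interpret stab n E A k0 by unfold_locales (rule st)
  have "\<forall>k\<ge>k0. A k = A k0"
  proof (intro allI impI)
    fix k assume "k \<ge> k0"
    then show "A k = A k0"
    proof (induction k rule: dec_induct)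
      case (step k)
      then have "weight_balanced n (A k)" using balanced by simp
      then have "A (Suc k) = A k" by (rule balanced_step)
      then show ?case using step(3) by (rule trans)
    qed simp
  qed
  then show ?thesis using balanced by blast
qed

end

theorem theorem4p4:
  fixes n :: nat and E :: "(nat \<times> nat) set" and A :: "nat \<Rightarrow> nat \<Rightarrow> nat \<Rightarrow> real"
  assumes "E \<subseteq> {..<n} \<times> {..<n}"
    and "strongly_connected n E"
    and "A 0 \<in> Adj n E"
    and "\<forall>k. A (Suc k) \<in> f_imcor n E (A k)"
  shows "\<exists>K. weight_balanced n (A K) \<and> (\<forall>k\<ge>K. A k = A K)"
  using imcor.main[OF imcor.intro[OF assms]] .

end
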